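(* Let $H$ be a subgroup of index $m$ in a group $G$, and let $M$ be a free $\mathbb ZH$-module of rank at most $m$. Then $M\rtimes H$ embeds as a subgroup of the wreath product $\mathbb Z\wr G$.
   Context: $H$ acts on the free $\mathbb ZH$-module $M$ by left multiplication, and $M\rtimes H$ is $M\times H$ with $(m,h)(m',h')=(m+hm',hh')$. The (restricted) wreath product $\mathbb Z\wr G$ is the semidirect product $\mathbb ZG\rtimes G$, with $G$ acting on the group ring $\mathbb ZG$ by left multiplication. *)

theory Defs
  imports "HOL-Algebra.Algebra"
begin

text \<open>The (restricted) wreath product Z wr G = ZG x| G. An element of the group ring ZG
  is a finitely supported function carrier G -> int (the coefficient function),
  G acts on ZG by left multiplication: (g . a)(x) = a(g^-1 x).\<close>

definition wreath_Z :: "('g, 'b) monoid_scheme \<Rightarrow> (('g \<Rightarrow> int) \<times> 'g) monoid" where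
  "wreath_Z G = \<lparr>
     carrier = {(a, g). g \<in> carrier G \<and> finite {x. a x \<noteq> 0}
                        \<and> (\<forall>x. x \<notin> carrier G \<longrightarrow> a x = 0)},
     Group.monoid.mult = (\<lambda>(a, g) (b, g').
              (\<lambda>x. if x \<in> carrier G then a x + b (inv\<^bsub>G\<^esub> g \<otimes>\<^bsub>G\<^esub> x) else 0,
               g \<otimes>\<^bsub>G\<^esub> g')),
     one = (\<lambda>x. 0, \<one>\<^bsub>G\<^esub>) \<rparr>"

text \<open>The free ZH-module with basis indexed by the set I, i.e. the direct sum of copies of
  ZH indexed by I, realised as finitely supported functions I x H -> int
  (the coefficient of basis element i at group element k). H acts by left multiplication:
  (h . f)(i, k) = f(i, h^-1 k). free_semidirect G H I is the semidirect product M x| H.\<close>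

definition free_semidirect ::
  "('g, 'b) monoid_scheme \<Rightarrow> 'g set \<Rightarrow> 'i set \<Rightarrow> (('i \<times> 'g \<Rightarrow> int) \<times> 'g) monoid" where
  "free_semidirect G H I = \<lparr>
     carrier = {(f, h). h \<in> H \<and> finite {p. f p \<noteq> 0}
                        \<and> (\<forall>i k. \<not> (i \<in> I \<and> k \<in> H) \<longrightarrow> f (i, k) = 0)},
     Group.monoid.mult = (\<lambda>(f, h) (f', h').
              (\<lambda>(i, k). if i \<in> I \<and> k \<in> H then f (i, k) + f' (i, inv\<^bsub>G\<^esub> h \<otimes>\<^bsub>G\<^esub> k) else 0,
               h \<otimes>\<^bsub>G\<^esub> h')),
     one = (\<lambda>p. 0, \<one>\<^bsub>G\<^esub>) \<rparr>"

end

theory Submission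
  imports Defs
begin

lemma reps_exist:
  assumes G: "group G" and H: "subgroup H G"
    and fin: "finite (rcosets\<^bsub>G\<^esub> H)" and fI: "finite I"
    and le: "card I \<le> card (rcosets\<^bsub>G\<^esub> H)"
  shows "\<exists>r. (\<forall>i\<in>I. r i \<in> carrier G) \<and>
     (\<forall>i\<in>I. \<forall>j\<in>I. \<forall>x\<in>carrier G. x \<otimes>\<^bsub>G\<^esub> inv\<^bsub>G\<^esub> r i \<in> H \<longrightarrow> x \<otimes>\<^bsub>G\<^esub> inv\<^bsub>G\<^esub> r j \<in> H \<longrightarrow> i = j)"
proof -
  interpret group G by fact
  interpret subgroup H G by fact
  obtain c where c: "c ` I \<subseteq> rcosets\<^bsub>G\<^esub> H" "inj_on c I"
    using card_le_inj[OF fI fin le] by blast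
  have ex: "\<forall>i\<in>I. \<exists>g. g \<in> carrier G \<and> c i = H #>\<^bsub>G\<^esub> g"
    using c(1) unfolding RCOSETS_def by blast
  then obtain r where r: "\<forall>i\<in>I. r i \<in> carrier G \<and> c i = H #>\<^bsub>G\<^esub> r i" by metis
  have "\<forall>i\<in>I. \<forall>j\<in>I. \<forall>x\<in>carrier G. x \<otimes>\<^bsub>G\<^esub> inv\<^bsub>G\<^esub> r i \<in> H \<longrightarrow> x \<otimes>\<^bsub>G\<^esub> inv\<^bsub>G\<^esub> r j \<in> H \<longrightarrow> i = j"
  proof (intro ballI impI)
    fix i j x assume i: "i \<in> I" and j: "j \<in> I" and x: "x \<in> carrier G"
      and a: "x \<otimes>\<^bsub>G\<^esub> inv\<^bsub>G\<^esub> r i \<in> H" and b: "x \<otimes>\<^bsub>G\<^esub> inv\<^bsub>G\<^esub> r j \<in> H"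
    have "x \<in> c i" using rcos_module_rev[OF G _ x a] r i by auto
    moreover have "x \<in> c j" using rcos_module_rev[OF G _ x b] r j by auto
    ultimately have "c i = c j"
      using rcos_disjoint[OF H] c(1) i j unfolding pairwise_def disjnt_def by blast
    thus "i = j" using c(2) i j by (meson inj_onD)
  qed
  thus ?thesis using r by blast
qed

theorem lemma2:
  fixes G :: "('g, 'b) monoid_scheme" and H :: "'g set" and I :: "'i set" and m :: nat
  assumes "group G"
    and "subgroup H G"
    and "finite (rcosets\<^bsub>G\<^esub> H)" and "card (rcosets\<^bsub>G\<^esub> H) = m"
    and "finite I" and "card I \<le> m"
  shows "\<exists>\<phi>. \<phi> \<in> hom (free_semidirect G H I) (wreath_Z G)
             \<and> inj_on \<phi> (carrier (free_semidirect G H I))"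
proof -
  interpret group G by fact
  interpret subgroup H G by fact
  obtain r where rG: "\<And>i. i\<in>I \<Longrightarrow> r i \<in> carrier G"
    and rD: "\<And>i j x. i\<in>I \<Longrightarrow> j\<in>I \<Longrightarrow> x\<in>carrier G \<Longrightarrow> x \<otimes>\<^bsub>G\<^esub> inv\<^bsub>G\<^esub> r i \<in> H \<Longrightarrow> x \<otimes>\<^bsub>G\<^esub> inv\<^bsub>G\<^esub> r j \<in> H \<Longrightarrow> i = j"
    using reps_exist[OF assms(1,2,3,5)] assms(4,6) by blast
  define C where "C i x \<longleftrightarrow> x \<in> carrier G \<and> x \<otimes>\<^bsub>G\<^esub> inv\<^bsub>G\<^esub> r i \<in> H" for i x
  define \<alpha> where "\<alpha> f x = (\<Sum>i\<in>I. if C i x then f (i, x \<otimes>\<^bsub>G\<^esub> inv\<^bsub>G\<^esub> r i) else 0)"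
    for f :: "'i \<times> 'g \<Rightarrow> int" and x
  define \<phi> where "\<phi> = (\<lambda>(f, h::'g). (\<alpha> f, h))"
  have eval: "\<alpha> f (k \<otimes>\<^bsub>G\<^esub> r i) = f (i, k)" if i: "i \<in> I" and k: "k \<in> H" for f i k
  proof -
    have kG: "k \<in> carrier G" using k by auto
    have xr: "(k \<otimes>\<^bsub>G\<^esub> r i) \<otimes>\<^bsub>G\<^esub> inv\<^bsub>G\<^esub> r i = k" using kG rG[OF i] by (simp add: m_assoc)
    have Ci: "C i (k \<otimes>\<^bsub>G\<^esub> r i)" unfolding C_def using xr k kG rG[OF i] by auto
    have "\<alpha> f (k \<otimes>\<^bsub>G\<^esub> r i) = (\<Sum>j\<in>I. if j = i then f (i, k) else 0)"
      unfolding \<alpha>_def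
    proof (rule sum.cong[OF refl])
      fix j assume j: "j \<in> I"
      show "(if C j (k \<otimes>\<^bsub>G\<^esub> r i) then f (j, k \<otimes>\<^bsub>G\<^esub> r i \<otimes>\<^bsub>G\<^esub> inv\<^bsub>G\<^esub> r j) else 0) = (if j = i then f (i, k) else 0)"
        using rD[OF i j, of "k \<otimes>\<^bsub>G\<^esub> r i"] Ci xr unfolding C_def by auto
    qed
    also have "\<dots> = f (i, k)" using i assms(5) by simp
    finally show ?thesis .
  qed
  have carr: "\<phi> p \<in> carrier (wreath_Z G)" if p: "p \<in> carrier (free_semidirect G H I)" for p
  proof -
    obtain f h where fh: "p = (f, h)" by fastforce
    have h: "h \<in> H" and ff: "finite {q. f q \<noteq> 0}"
      using p unfolding fh free_semidirect_def by auto
    have "{x. \<alpha> f x \<noteq> 0} \<subseteq> (\<lambda>(i, k). k \<otimes>\<^bsub>G\<^esub> r i) ` {q. f q \<noteq> 0}"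
    proof
      fix x assume "x \<in> {x. \<alpha> f x \<noteq> 0}"
      hence "(\<Sum>i\<in>I. if C i x then f (i, x \<otimes>\<^bsub>G\<^esub> inv\<^bsub>G\<^esub> r i) else 0) \<noteq> 0"
        unfolding \<alpha>_def by simp
      then obtain i where i: "i \<in> I" and t: "(if C i x then f (i, x \<otimes>\<^bsub>G\<^esub> inv\<^bsub>G\<^esub> r i) else 0) \<noteq> 0"
        by (rule sum.not_neutral_contains_not_neutral)
      have Cx: "C i x" and fx: "f (i, x \<otimes>\<^bsub>G\<^esub> inv\<^bsub>G\<^esub> r i) \<noteq> 0" using t by (auto split: if_splits)
      have xe: "x = (x \<otimes>\<^bsub>G\<^esub> inv\<^bsub>G\<^esub> r i) \<otimes>\<^bsub>G\<^esub> r i" using Cx rG[OF i] unfolding C_def by (simp add: m_assoc)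
      show "x \<in> (\<lambda>(i, k). k \<otimes>\<^bsub>G\<^esub> r i) ` {q. f q \<noteq> 0}"
      proof (rule image_eqI[of _ _ "(i, x \<otimes>\<^bsub>G\<^esub> inv\<^bsub>G\<^esub> r i)"])
        show "x = (\<lambda>(i, k). k \<otimes>\<^bsub>G\<^esub> r i) (i, x \<otimes>\<^bsub>G\<^esub> inv\<^bsub>G\<^esub> r i)"
          unfolding prod.case by (rule xe)
        show "(i, x \<otimes>\<^bsub>G\<^esub> inv\<^bsub>G\<^esub> r i) \<in> {q. f q \<noteq> 0}" using fx by simp
      qed
    qed
    hence "finite {x. \<alpha> f x \<noteq> 0}" using ff finite_surj by blast
    moreover have "\<forall>x. x \<notin> carrier G \<longrightarrow> \<alpha> f x = 0" unfolding \<alpha>_def C_def by simp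
    ultimately show ?thesis using h unfolding fh \<phi>_def wreath_Z_def by auto
  qed
  have hom: "\<phi> \<in> hom (free_semidirect G H I) (wreath_Z G)"
  proof (rule homI)
    fix p assume "p \<in> carrier (free_semidirect G H I)" thus "\<phi> p \<in> carrier (wreath_Z G)" by (rule carr)
  next
    fix p q assume p: "p \<in> carrier (free_semidirect G H I)" and q: "q \<in> carrier (free_semidirect G H I)"
    obtain f h where fh: "p = (f, h)" by fastforce
    obtain f' h' where fh': "q = (f', h')" by fastforce
    have h: "h \<in> H" using p unfolding fh free_semidirect_def by auto
    have hG: "h \<in> carrier G" using h by auto
    define F where "F = (\<lambda>(i, k). if i \<in> I \<and> k \<in> H then f (i, k) + f' (i, inv\<^bsub>G\<^esub> h \<otimes>\<^bsub>G\<^esub> k) else 0)"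
    have "\<alpha> F x = (if x \<in> carrier G then \<alpha> f x + \<alpha> f' (inv\<^bsub>G\<^esub> h \<otimes>\<^bsub>G\<^esub> x) else 0)" for x
    proof (cases "x \<in> carrier G")
      case False thus ?thesis unfolding \<alpha>_def C_def by simp
    next
      case True
      have "\<alpha> F x = (\<Sum>i\<in>I. (if C i x then f (i, x \<otimes>\<^bsub>G\<^esub> inv\<^bsub>G\<^esub> r i) else 0)
               + (if C i (inv\<^bsub>G\<^esub> h \<otimes>\<^bsub>G\<^esub> x) then f' (i, (inv\<^bsub>G\<^esub> h \<otimes>\<^bsub>G\<^esub> x) \<otimes>\<^bsub>G\<^esub> inv\<^bsub>G\<^esub> r i) else 0))"
        unfolding \<alpha>_def
      proof (rule sum.cong[OF refl])
        fix i assume i: "i \<in> I"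
        have eq: "(inv\<^bsub>G\<^esub> h \<otimes>\<^bsub>G\<^esub> x) \<otimes>\<^bsub>G\<^esub> inv\<^bsub>G\<^esub> r i = inv\<^bsub>G\<^esub> h \<otimes>\<^bsub>G\<^esub> (x \<otimes>\<^bsub>G\<^esub> inv\<^bsub>G\<^esub> r i)"
          using True hG rG[OF i] by (simp add: m_assoc)
        have iff: "C i (inv\<^bsub>G\<^esub> h \<otimes>\<^bsub>G\<^esub> x) \<longleftrightarrow> C i x"
        proof
          assume "C i x"
          thus "C i (inv\<^bsub>G\<^esub> h \<otimes>\<^bsub>G\<^esub> x)" using eq h hG True unfolding C_def by auto
        next
          assume a: "C i (inv\<^bsub>G\<^esub> h \<otimes>\<^bsub>G\<^esub> x)"
          have "x \<otimes>\<^bsub>G\<^esub> inv\<^bsub>G\<^esub> r i = h \<otimes>\<^bsub>G\<^esub> ((inv\<^bsub>G\<^esub> h \<otimes>\<^bsub>G\<^esub> x) \<otimes>\<^bsub>G\<^esub> inv\<^bsub>G\<^esub> r i)"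
            using eq hG True rG[OF i] by (simp add: m_assoc[symmetric])
          thus "C i x" using a h True unfolding C_def by auto
        qed
        show "(if C i x then F (i, x \<otimes>\<^bsub>G\<^esub> inv\<^bsub>G\<^esub> r i) else 0) =
          (if C i x then f (i, x \<otimes>\<^bsub>G\<^esub> inv\<^bsub>G\<^esub> r i) else 0) +
          (if C i (inv\<^bsub>G\<^esub> h \<otimes>\<^bsub>G\<^esub> x) then f' (i, inv\<^bsub>G\<^esub> h \<otimes>\<^bsub>G\<^esub> x \<otimes>\<^bsub>G\<^esub> inv\<^bsub>G\<^esub> r i) else 0)"
          using iff eq i unfolding F_def C_def by auto
      qed
      also have "\<dots> = \<alpha> f x + \<alpha> f' (inv\<^bsub>G\<^esub> h \<otimes>\<^bsub>G\<^esub> x)" unfolding \<alpha>_def by (rule sum.distrib)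
      finally show ?thesis using True by simp
    qed
    hence aF: "\<alpha> F = (\<lambda>x. if x \<in> carrier G then \<alpha> f x + \<alpha> f' (inv\<^bsub>G\<^esub> h \<otimes>\<^bsub>G\<^esub> x) else 0)" by (rule ext)
    have m1: "p \<otimes>\<^bsub>free_semidirect G H I\<^esub> q = (F, h \<otimes>\<^bsub>G\<^esub> h')"
      unfolding fh fh' free_semidirect_def F_def by simp
    have m2: "\<phi> p \<otimes>\<^bsub>wreath_Z G\<^esub> \<phi> q = ((\<lambda>x. if x \<in> carrier G then \<alpha> f x + \<alpha> f' (inv\<^bsub>G\<^esub> h \<otimes>\<^bsub>G\<^esub> x) else 0), h \<otimes>\<^bsub>G\<^esub> h')"
      unfolding fh fh' \<phi>_def wreath_Z_def by simp
    show "\<phi> (p \<otimes>\<^bsub>free_semidirect G H I\<^esub> q) = \<phi> p \<otimes>\<^bsub>wreath_Z G\<^esub> \<phi> q"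
      unfolding m1 m2 by (simp add: \<phi>_def aF)
  qed
  have inj: "inj_on \<phi> (carrier (free_semidirect G H I))"
  proof (rule inj_onI)
    fix p q assume p: "p \<in> carrier (free_semidirect G H I)" and q: "q \<in> carrier (free_semidirect G H I)"
      and e: "\<phi> p = \<phi> q"
    obtain f h where fh: "p = (f, h)" by fastforce
    obtain f' h' where fh': "q = (f', h')" by fastforce
    have z: "\<forall>i k. \<not> (i \<in> I \<and> k \<in> H) \<longrightarrow> f (i, k) = 0"
      "\<forall>i k. \<not> (i \<in> I \<and> k \<in> H) \<longrightarrow> f' (i, k) = 0"
      using p q unfolding fh fh' free_semidirect_def by auto
    have hh: "h = h'" and aa: "\<alpha> f = \<alpha> f'" using e unfolding fh fh' \<phi>_def by auto
    have "f (i, k) = f' (i, k)" for i k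
    proof (cases "i \<in> I \<and> k \<in> H")
      case True
      thus ?thesis using eval[of i k f] eval[of i k f'] aa by auto
    next
      case False thus ?thesis using z by auto
    qed
    hence "f = f'" by auto
    thus "p = q" using hh fh fh' by simp
  qed
  show ?thesis using hom inj by blast
qed

end
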